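(* Let $\varphi(x)$ be a first-order formula of quantifier rank at most $q$ over a finite modal signature, and suppose $\varphi$ is invariant under graded bisimulation $\sim_{\mathrm{C}}$ on the class of all pointed Kripke structures (respectively, on the class of all finite pointed Kripke structures). Let $\ell=2^q-1$. Then for every pointed Kripke structure (respectively, every finite pointed Kripke structure) $\mathcal{M},w$ such that $\mathcal{M}\restriction N^\ell(w),w$ is rooted tree-like, we have $$\mathcal{M}\models\varphi[w]\iff \mathcal{M}\restriction N^\ell(w)\models\varphi[w].$$
   Context: A finite modal signature consists of a finite set $I$ of agents and a finite set $J$ of basic propositions. A Kripke structure is $\mathcal{M}=(W,(E_i)_{i\in I},(P_j)_{j\in J})$ with $W\neq\emptyset$, $E_i\subseteq W\times W$, $P_j\subseteq W$, viewed as a relational structure with binary relations $E_i$ and unary relations $P_j$; a pointed Kripke structure $\mathcal{M},w$ has a distinguished world $w$, and $\varphi(x)$ is evaluated by assigning $w$ to $x$. $E_i[u]=\{v:(u,v)\in E_i\}$. A graded bisimulation between $\mathcal{M}$ and $\mathcal{M}'=(W',(E'_i),(P'_j))$ is a non-empty relation $Z\subseteq W\times W'$ such that for all $(u,u')\in Z$: (atom equivalence) $u\in P_j\iff u'\in P'_j$ for all $j$; (graded forth) for every $i$ and $k\ge1$ and pairwise distinct $v_1,\dots,v_k\in E_i[u]$ there are pairwise distinct $v'_1,\dots,v'_k\in E'_i[u']$ with $(v_m,v'_m)\in Z$ for all $m$; (graded back) symmetrically. $\mathcal{M},w\sim_{\mathrm{C}}\mathcal{M}',w'$ if such $Z$ exists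 with $(w,w')\in Z$. The $\ell$-neighbourhood $N^\ell(w)$ of $w$ is the set of worlds at distance at most $\ell$ from $w$ in the undirected graph on $W$ whose edges are given by the union of the symmetrisations of all $E_i$; $\mathcal{M}\restriction N^\ell(w)$ is the induced substructure on $N^\ell(w)$. $\mathcal{M}\restriction N^\ell(w),w$ is rooted tree-like (equivalently, $\mathcal{M},w$ is rooted tree-like to depth $\ell$) if, within $N^\ell(w)$, the symmetrisations of the $E_i$ are pairwise disjoint, their union is acyclic (so it forms an undirected tree with root $w$), and every $E_i$-edge within $N^\ell(w)$ is directed away from the root $w$. *)

theory Defs
  imports Main
begin

record ('w, 'i, 'j) kripke =
  worlds :: "'w set"
  rel    :: "'i \<Rightarrow> ('w \<times> 'w) set"
  val    :: "'j \<Rightarrow> 'w set"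

definition wf_kripke :: "('w, 'i, 'j) kripke \<Rightarrow> bool" where
  "wf_kripke M \<longleftrightarrow> worlds M \<noteq> {}
     \<and> (\<forall>i. rel M i \<subseteq> worlds M \<times> worlds M)
     \<and> (\<forall>j. val M j \<subseteq> worlds M)"

definition graded_bisim ::
  "('w, 'i, 'j) kripke \<Rightarrow> ('v, 'i, 'j) kripke \<Rightarrow> ('w \<times> 'v) set \<Rightarrow> bool" where
  "graded_bisim M M' Z \<longleftrightarrow> Z \<noteq> {} \<and> Z \<subseteq> worlds M \<times> worlds M' \<and>
     (\<forall>(u, u') \<in> Z.
        (\<forall>j. u \<in> val M j \<longleftrightarrow> u' \<in> val M' j) \<and>
        (\<forall>i vs. vs \<noteq> [] \<and> distinct vs \<and> set vs \<subseteq> rel M i `` {u} \<longrightarrow>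
           (\<exists>vs'. distinct vs' \<and> set vs' \<subseteq> rel M' i `` {u'} \<and>
                  list_all2 (\<lambda>a b. (a, b) \<in> Z) vs vs')) \<and>
        (\<forall>i vs'. vs' \<noteq> [] \<and> distinct vs' \<and> set vs' \<subseteq> rel M' i `` {u'} \<longrightarrow>
           (\<exists>vs. distinct vs \<and> set vs \<subseteq> rel M i `` {u} \<and>
                  list_all2 (\<lambda>a b. (a, b) \<in> Z) vs vs')))"

definition gbisimilar ::
  "('w, 'i, 'j) kripke \<Rightarrow> 'w \<Rightarrow> ('v, 'i, 'j) kripke \<Rightarrow> 'v \<Rightarrow> bool" where
  "gbisimilar M w M' w' \<longleftrightarrow> (\<exists>Z. graded_bisim M M' Z \<and> (w, w') \<in> Z)"

datatype ('i, 'j) fo =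
    FEq nat nat
  | FRel 'i nat nat
  | FPred 'j nat
  | FNeg "('i, 'j) fo"
  | FConj "('i, 'j) fo" "('i, 'j) fo"
  | FDisj "('i, 'j) fo" "('i, 'j) fo"
  | FEx nat "('i, 'j) fo"
  | FAll nat "('i, 'j) fo"

fun fv :: "('i, 'j) fo \<Rightarrow> nat set" where
  "fv (FEq x y) = {x, y}"
| "fv (FRel i x y) = {x, y}"
| "fv (FPred j x) = {x}"
| "fv (FNeg f) = fv f"
| "fv (FConj f g) = fv f \<union> fv g"
| "fv (FDisj f g) = fv f \<union> fv g"
| "fv (FEx x f) = fv f - {x}"
| "fv (FAll x f) = fv f - {x}"

fun qr :: "('i, 'j) fo \<Rightarrow> nat" where
  "qr (FEq x y) = 0"
| "qr (FRel i x y) = 0"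
| "qr (FPred j x) = 0"
| "qr (FNeg f) = qr f"
| "qr (FConj f g) = max (qr f) (qr g)"
| "qr (FDisj f g) = max (qr f) (qr g)"
| "qr (FEx x f) = Suc (qr f)"
| "qr (FAll x f) = Suc (qr f)"

fun sat :: "('w, 'i, 'j) kripke \<Rightarrow> (nat \<Rightarrow> 'w) \<Rightarrow> ('i, 'j) fo \<Rightarrow> bool" where
  "sat M v (FEq x y) \<longleftrightarrow> v x = v y"
| "sat M v (FRel i x y) \<longleftrightarrow> (v x, v y) \<in> rel M i"
| "sat M v (FPred j x) \<longleftrightarrow> v x \<in> val M j"
| "sat M v (FNeg f) \<longleftrightarrow> \<not> sat M v f"
| "sat M v (FConj f g) \<longleftrightarrow> sat M v f \<and> sat M v g"
| "sat M v (FDisj f g) \<longleftrightarrow> sat M v f \<or> sat M v g"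
| "sat M v (FEx x f) \<longleftrightarrow> (\<exists>a \<in> worlds M. sat M (v(x := a)) f)"
| "sat M v (FAll x f) \<longleftrightarrow> (\<forall>a \<in> worlds M. sat M (v(x := a)) f)"

text \<open>M |= phi[w] for a formula phi(x) whose only free variable is x:
  the world w is assigned to x (and, harmlessly, to every other variable).\<close>
definition holds_at :: "('w, 'i, 'j) kripke \<Rightarrow> 'w \<Rightarrow> ('i, 'j) fo \<Rightarrow> bool" where
  "holds_at M w f \<longleftrightarrow> sat M (\<lambda>_. w) f"

definition gbisim_invariant ::
  "(('u, 'i, 'j) kripke \<Rightarrow> bool) \<Rightarrow> ('i, 'j) fo \<Rightarrow> bool" where
  "gbisim_invariant C f \<longleftrightarrow>
     (\<forall>M w M' w'. wf_kripke M \<and> wf_kripke M' \<and> C M \<and> C M' \<and>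
        w \<in> worlds M \<and> w' \<in> worlds M' \<and> gbisimilar M w M' w' \<longrightarrow>
        (holds_at M w f \<longleftrightarrow> holds_at M' w' f))"

definition ugraph :: "('w, 'i, 'j) kripke \<Rightarrow> ('w \<times> 'w) set" where
  "ugraph M = (\<Union>i. rel M i \<union> (rel M i)\<inverse>)"

definition nbhd :: "('w, 'i, 'j) kripke \<Rightarrow> nat \<Rightarrow> 'w \<Rightarrow> 'w set" where
  "nbhd M l w = {u. \<exists>n \<le> l. (w, u) \<in> ugraph M ^^ n}"

definition restrict :: "('w, 'i, 'j) kripke \<Rightarrow> 'w set \<Rightarrow> ('w, 'i, 'j) kripke" where
  "restrict M S = \<lparr> worlds = worlds M \<inter> S,
                    rel = (\<lambda>i. rel M i \<inter> (S \<times> S)),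
                    val = (\<lambda>j. val M j \<inter> S) \<rparr>"

definition udist :: "('w, 'i, 'j) kripke \<Rightarrow> 'w \<Rightarrow> 'w \<Rightarrow> nat" where
  "udist M w u = (LEAST n. (w, u) \<in> ugraph M ^^ n)"

definition ucycle :: "('w \<times> 'w) set \<Rightarrow> 'w list \<Rightarrow> bool" where
  "ucycle G cs \<longleftrightarrow> length cs \<ge> 3 \<and> distinct cs \<and>
     (\<forall>k < length cs. (cs ! k, cs ! ((k + 1) mod length cs)) \<in> G)"

definition uacyclic :: "('w \<times> 'w) set \<Rightarrow> bool" where
  "uacyclic G \<longleftrightarrow> (\<forall>u. (u, u) \<notin> G) \<and> \<not> (\<exists>cs. ucycle G cs)"

definition rooted_tree_like :: "('w, 'i, 'j) kripke \<Rightarrow> 'w \<Rightarrow> bool" where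
  "rooted_tree_like M w \<longleftrightarrow>
     (\<forall>i i'. i \<noteq> i' \<longrightarrow> (rel M i \<union> (rel M i)\<inverse>) \<inter> (rel M i' \<union> (rel M i')\<inverse>) = {}) \<and>
     uacyclic (ugraph M) \<and>
     (\<forall>u \<in> worlds M. (w, u) \<in> (ugraph M)\<^sup>*) \<and>
     (\<forall>i u v. (u, v) \<in> rel M i \<longrightarrow> udist M w v = Suc (udist M w u))"

end

theory Submission
  imports Defs
begin


definition adj :: "('w, 'i, 'j) kripke \<Rightarrow> 'w \<Rightarrow> 'w \<Rightarrow> bool" where
  "adj M x v \<longleftrightarrow> (\<exists>i. (x, v) \<in> rel M i \<or> (v, x) \<in> rel M i)"

fun walk :: "('w, 'i, 'j) kripke \<Rightarrow> 'w set \<Rightarrow> nat \<Rightarrow> 'w \<Rightarrow> 'w \<Rightarrow> bool" where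
  "walk M D 0 u v \<longleftrightarrow> u = v"
| "walk M D (Suc n) u v \<longleftrightarrow> (\<exists>x. walk M D n u x \<and> x \<in> D \<and> v \<in> D \<and> adj M x v)"

definition ball :: "('w, 'i, 'j) kripke \<Rightarrow> 'w set \<Rightarrow> nat \<Rightarrow> 'w \<Rightarrow> 'w set" where
  "ball M D n u = {v. \<exists>j\<le>n. walk M D j u v}"

lemma walk_trans: "walk M D a u x \<Longrightarrow> walk M D b x v \<Longrightarrow> walk M D (a + b) u v"
proof (induction b arbitrary: v)
  case 0 then show ?case by simp
next
  case (Suc b) then show ?case by (metis add_Suc_right walk.simps(2))
qed

lemma walk_sym: "walk M D n u v \<Longrightarrow> walk M D n v u"
proof (induction n arbitrary: v)
  case 0 then show ?case by simp
next
  case (Suc n)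
  then obtain x where x: "walk M D n u x" "x \<in> D" "v \<in> D" "adj M x v" by auto
  have "walk M D 1 v x" using x by (auto simp: adj_def)
  moreover have "walk M D n x u" using Suc.IH x(1) by blast
  ultimately show ?case using walk_trans by fastforce
qed

lemma walk_transfer:
  "walk M D n u v \<Longrightarrow> (\<And>j x. j < n \<Longrightarrow> walk M D j u x \<Longrightarrow> x \<in> D') \<Longrightarrow> v \<in> D'
   \<Longrightarrow> walk M D' n u v"
proof (induction n arbitrary: v)
  case 0 then show ?case by simp
next
  case (Suc n)
  then obtain x where x: "walk M D n u x" "x \<in> D" "v \<in> D" "adj M x v" by auto
  have xD: "x \<in> D'" using Suc.prems(2)[of n x] x(1) by simp
  have "walk M D' n u x" using Suc.IH[OF x(1) _ xD] Suc.prems(2) less_SucI by blast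
  then show ?case using xD Suc.prems(3) x(4) by auto
qed

lemma ball_mono: "n \<le> n' \<Longrightarrow> ball M D n u \<subseteq> ball M D n' u"
  unfolding ball_def using le_trans by blast

lemma walk_in: "walk M D n u v \<Longrightarrow> u \<in> D \<Longrightarrow> v \<in> D"
  by (cases n) auto

lemma ball_sub: "u \<in> D \<Longrightarrow> ball M D n u \<subseteq> D"
  unfolding ball_def using walk_in by fast

lemma walk_ugraph: "walk M D n u v \<Longrightarrow> (u, v) \<in> ugraph M ^^ n"
proof (induction n arbitrary: v)
  case 0 then show ?case by simp
next
  case (Suc n)
  then obtain x where x: "walk M D n u x" "adj M x v" by auto
  have "(x, v) \<in> ugraph M" using x(2) unfolding adj_def ugraph_def by auto
  then show ?case using Suc.IH[OF x(1)] by auto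
qed



definition copies :: "('w, 'i, 'j) kripke \<Rightarrow> (nat \<Rightarrow> 'w set) \<Rightarrow> nat \<Rightarrow> (nat \<times> 'w, 'i, 'j) kripke" where
  "copies M D K = \<lparr> worlds = {(c, u). c < K \<and> u \<in> D c},
     rel = (\<lambda>i. {((c, u), (c', v)). c' = c \<and> c < K \<and> u \<in> D c \<and> v \<in> D c \<and> (u, v) \<in> rel M i}),
     val = (\<lambda>j. {(c, u). c < K \<and> u \<in> D c \<and> u \<in> val M j}) \<rparr>"

definition closeD :: "('w, 'i, 'j) kripke \<Rightarrow> (nat \<Rightarrow> 'w set) \<Rightarrow> nat \<Rightarrow> nat \<times> 'w \<Rightarrow> nat \<times> 'w \<Rightarrow> bool" where
  "closeD M D m a a' \<longleftrightarrow> fst a = fst a' \<and> (\<exists>j\<le>m. walk M (D (fst a)) j (snd a) (snd a'))"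

definition pok :: "('w, 'i, 'j) kripke \<Rightarrow> (nat \<Rightarrow> 'w set) \<Rightarrow> (nat \<Rightarrow> 'w set) \<Rightarrow> nat \<Rightarrow> nat
   \<Rightarrow> nat \<times> 'w \<Rightarrow> nat \<times> 'w \<Rightarrow> bool" where
  "pok M DA DB K k a b \<longleftrightarrow> fst a < K \<and> snd a \<in> DA (fst a) \<and>
           fst b < K \<and> snd b \<in> DB (fst b) \<and> snd a = snd b \<and>
           ball M (DA (fst a)) (2^k - 1) (snd a) \<subseteq> DB (fst b) \<and>
           ball M (DB (fst b)) (2^k - 1) (snd b) \<subseteq> DA (fst a)"

definition cok :: "('w, 'i, 'j) kripke \<Rightarrow> (nat \<Rightarrow> 'w set) \<Rightarrow> (nat \<Rightarrow> 'w set) \<Rightarrow> nat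
   \<Rightarrow> nat \<times> 'w \<Rightarrow> nat \<times> 'w \<Rightarrow> nat \<times> 'w \<Rightarrow> nat \<times> 'w \<Rightarrow> bool" where
  "cok M DA DB k a b a' b' \<longleftrightarrow> (\<forall>m\<le>2^k. closeD M DA m a a' \<longleftrightarrow> closeD M DB m b b')"

definition Inv :: "('w, 'i, 'j) kripke \<Rightarrow> (nat \<Rightarrow> 'w set) \<Rightarrow> (nat \<Rightarrow> 'w set) \<Rightarrow> nat \<Rightarrow> nat \<Rightarrow> nat
   \<Rightarrow> nat set \<Rightarrow> (nat \<Rightarrow> nat \<times> 'w) \<Rightarrow> (nat \<Rightarrow> nat \<times> 'w) \<Rightarrow> bool" where
  "Inv M DA DB K q k V va vb \<longleftrightarrow> finite V \<and>
    (\<forall>y\<in>V. pok M DA DB K k (va y) (vb y)) \<and>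
    (\<forall>y\<in>V. \<forall>z\<in>V. cok M DA DB k (va y) (vb y) (va z) (vb z)) \<and>
    card (fst ` va ` V) + k \<le> Suc q \<and> card (fst ` vb ` V) + k \<le> Suc q"

definition fresh :: "(nat \<Rightarrow> 'w set) \<Rightarrow> (nat \<Rightarrow> 'w set) \<Rightarrow> nat \<Rightarrow> nat \<Rightarrow> bool" where
  "fresh DA DB K q \<longleftrightarrow> (\<forall>c<K. \<forall>U. finite U \<and> card U \<le> q \<longrightarrow> (\<exists>e<K. e \<notin> U \<and> DB e = DA c))"

lemma pok_swap: "pok M DA DB K k a b \<Longrightarrow> pok M DB DA K k b a"
  unfolding pok_def by metis

lemma cok_swap: "cok M DA DB k a b a' b' \<Longrightarrow> cok M DB DA k b a b' a'"
  unfolding cok_def by metis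

lemma Inv_swap: "Inv M DA DB K q k V va vb \<Longrightarrow> Inv M DB DA K q k V vb va"
  unfolding Inv_def using pok_swap cok_swap by metis

lemma pok_mono: "pok M DA DB K (Suc k) a b \<Longrightarrow> pok M DA DB K k a b"
proof -
  have "(2::nat)^k - 1 \<le> 2^Suc k - 1" by simp
  then show "pok M DA DB K (Suc k) a b \<Longrightarrow> pok M DA DB K k a b"
    unfolding pok_def using ball_mono by (meson order_trans)
qed

lemma cok_mono: "cok M DA DB (Suc k) a b a' b' \<Longrightarrow> cok M DA DB k a b a' b'"
  unfolding cok_def by simp

lemma Inv_mono: "Inv M DA DB K q k V va vb \<Longrightarrow> V' \<subseteq> V \<Longrightarrow> Inv M DA DB K q k V' va vb"
proof -
  assume I: "Inv M DA DB K q k V va vb" and s: "V' \<subseteq> V"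
  have f: "finite V" using I unfolding Inv_def by blast
  have "card (fst ` va ` V') \<le> card (fst ` va ` V)" "card (fst ` vb ` V') \<le> card (fst ` vb ` V)"
    using f s by (auto intro!: card_mono)
  then show ?thesis using I s f unfolding Inv_def
    apply (elim conjE)
    apply (intro conjI)
    apply (blast intro: finite_subset)
    apply blast
    apply blast
    apply linarith
    apply linarith
    done
qed

lemma closeD_sym: "closeD M D m a a' \<longleftrightarrow> closeD M D m a' a"
  unfolding closeD_def using walk_sym by metis

lemma closeD_mono: "closeD M D m a a' \<Longrightarrow> m \<le> m' \<Longrightarrow> closeD M D m' a a'"
  unfolding closeD_def using le_trans by blast

lemma closeD_refl: "closeD M D m a a"
  unfolding closeD_def by (intro conjI exI[of _ 0]) auto



lemma glue:
  assumes I: "Inv M DA DB K q (Suc k) V va vb" and zV: "z \<notin> V"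
    and P: "pok M DA DB K k a b"
    and C: "\<And>z1. z1 \<in> V \<Longrightarrow> cok M DA DB k a b (va z1) (vb z1)"
    and cA: "card (insert (fst a) (fst ` va ` V)) + k \<le> Suc q"
    and cB: "card (insert (fst b) (fst ` vb ` V)) + k \<le> Suc q"
  shows "Inv M DA DB K q k (insert z V) (va(z:=a)) (vb(z:=b))"
proof -
  have f: "finite V" using I unfolding Inv_def by blast
  have im1: "fst ` (va(z:=a)) ` insert z V = insert (fst a) (fst ` va ` V)" using zV by auto
  have im2: "fst ` (vb(z:=b)) ` insert z V = insert (fst b) (fst ` vb ` V)" using zV by auto
  have old1: "\<forall>y\<in>V. pok M DA DB K k (va y) (vb y)"
    using I pok_mono unfolding Inv_def by blast
  have old2: "\<forall>y\<in>V. \<forall>z\<in>V. cok M DA DB k (va y) (vb y) (va z) (vb z)"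
    using I cok_mono unfolding Inv_def by blast
  have new1: "\<forall>y\<in>insert z V. pok M DA DB K k ((va(z:=a)) y) ((vb(z:=b)) y)"
    using old1 P zV by auto
  have csym: "cok M DA DB k a' b' a b" if "cok M DA DB k a b a' b'" for a b a' b'
    using that closeD_sym unfolding cok_def by metis
  have new2: "\<forall>y\<in>insert z V. \<forall>z1\<in>insert z V. cok M DA DB k ((va(z:=a)) y) ((vb(z:=b)) y) ((va(z:=a)) z1) ((vb(z:=b)) z1)"
  proof (intro ballI)
    fix y z1 assume y: "y \<in> insert z V" and z1: "z1 \<in> insert z V"
    show "cok M DA DB k ((va(z:=a)) y) ((vb(z:=b)) y) ((va(z:=a)) z1) ((vb(z:=b)) z1)"
    proof (cases "y = z")
      case True
      show ?thesis
      proof (cases "z1 = z")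
        case True then show ?thesis using \<open>y = z\<close> unfolding cok_def by (simp add: closeD_refl)
      next
        case False then show ?thesis using \<open>y = z\<close> z1 C by auto
      qed
    next
      case False
      show ?thesis
      proof (cases "z1 = z")
        case True then show ?thesis using \<open>y \<noteq> z\<close> y C csym by auto
      next
        case False then show ?thesis using \<open>y \<noteq> z\<close> y z1 old2 by auto
      qed
    qed
  qed
  show ?thesis unfolding Inv_def im1 im2 using f new1 new2 cA cB by blast
qed



lemma ext_step:
  assumes I: "Inv M DA DB K q (Suc k) V va vb" and zV: "z \<notin> V"
    and a: "fst a < K" "snd a \<in> DA (fst a)" and fr: "fresh DA DB K q"
  shows "\<exists>b. fst b < K \<and> snd b \<in> DB (fst b) \<and> Inv M DA DB K q k (insert z V) (va(z:=a)) (vb(z:=b))"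
proof -
  define P :: nat where "P = 2^k"
  have P1: "P \<ge> 1" unfolding P_def by simp
  have PS: "(2::nat)^Suc k - 1 = 2*P - 1" "(2::nat)^Suc k = 2*P" "(2::nat)^k - 1 = P - 1" "(2::nat)^k = P"
    unfolding P_def by simp_all
  have f: "finite V" using I unfolding Inv_def by blast
  have pokV: "\<And>y. y \<in> V \<Longrightarrow> pok M DA DB K (Suc k) (va y) (vb y)" using I unfolding Inv_def by blast
  have cokV: "\<And>y z1. y \<in> V \<Longrightarrow> z1 \<in> V \<Longrightarrow> cok M DA DB (Suc k) (va y) (vb y) (va z1) (vb z1)"
    using I unfolding Inv_def by blast
  have cardA: "card (fst ` va ` V) + Suc k \<le> Suc q" and cardB: "card (fst ` vb ` V) + Suc k \<le> Suc q"
    using I unfolding Inv_def by blast+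
  obtain c u where au: "a = (c, u)" by (cases a)
  show ?thesis
  proof (cases "\<exists>y\<in>V. closeD M DA P (va y) a")
    case True
    then obtain y where yV: "y \<in> V" and cl: "closeD M DA P (va y) a" by blast
    define uy where "uy = snd (va y)"
    define dy where "dy = fst (vb y)"
    have cy: "fst (va y) = c" using cl au unfolding closeD_def by simp
    obtain j where j: "j \<le> P" "walk M (DA c) j uy u" using cl au cy unfolding closeD_def uy_def by auto
    have py: "pok M DA DB K (Suc k) (va y) (vb y)" using pokV yV .
    have uyb: "snd (vb y) = uy" and dyK: "dy < K"
      and HA: "ball M (DA c) (2*P - 1) uy \<subseteq> DB dy" and HB: "ball M (DB dy) (2*P - 1) uy \<subseteq> DA c"
      using py cy unfolding pok_def uy_def dy_def PS by auto
    have inHA: "x \<in> DB dy" if "walk M (DA c) i uy x" "i \<le> 2*P - 1" for i x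
      using HA that unfolding ball_def by blast
    have inHB: "x \<in> DA c" if "walk M (DB dy) i uy x" "i \<le> 2*P - 1" for i x
      using HB that unfolding ball_def by blast
    have uDB: "u \<in> DB dy" using inHA[OF j(2)] j(1) P1 by simp
    have W1: "walk M (DB dy) j uy u"
      by (rule walk_transfer[OF j(2)]) (use inHA j(1) P1 uDB in auto)
    define b where "b = (dy, u)"
    have pk: "pok M DA DB K k a b"
      unfolding pok_def PS
    proof (intro conjI)
      show "fst a < K" "snd a \<in> DA (fst a)" using a .
      show "fst b < K" "snd b \<in> DB (fst b)" "snd a = snd b" using dyK uDB au unfolding b_def by auto
      show "ball M (DA (fst a)) (P - 1) (snd a) \<subseteq> DB (fst b)"
      proof
        fix v assume "v \<in> ball M (DA (fst a)) (P - 1) (snd a)"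
        then obtain i where "i \<le> P - 1" "walk M (DA c) i u v" unfolding ball_def au by auto
        then show "v \<in> DB (fst b)" using walk_trans[OF j(2)] inHA j(1) unfolding b_def by fastforce
      qed
      show "ball M (DB (fst b)) (P - 1) (snd b) \<subseteq> DA (fst a)"
      proof
        fix v assume "v \<in> ball M (DB (fst b)) (P - 1) (snd b)"
        then obtain i where "i \<le> P - 1" "walk M (DB dy) i u v" unfolding ball_def b_def by auto
        then show "v \<in> DA (fst a)" using walk_trans[OF W1] inHB j(1) unfolding au by fastforce
      qed
    qed
    have C: "cok M DA DB k a b (va z1) (vb z1)" if z1V: "z1 \<in> V" for z1
      unfolding cok_def PS
    proof (intro allI impI)
      fix m assume m: "m \<le> P"
      have pz: "pok M DA DB K (Suc k) (va z1) (vb z1)" using pokV z1V .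
      define uz where "uz = snd (va z1)"
      have uzb: "snd (vb z1) = uz" and uzA: "uz \<in> DA (fst (va z1))" and uzB: "uz \<in> DB (fst (vb z1))"
        using pz unfolding pok_def uz_def by auto
      have ck: "\<forall>m\<le>2*P. closeD M DA m (va y) (va z1) \<longleftrightarrow> closeD M DB m (vb y) (vb z1)"
        using cokV[OF yV z1V] unfolding cok_def PS .
      show "closeD M DA m a (va z1) \<longleftrightarrow> closeD M DB m b (vb z1)"
      proof
        assume "closeD M DA m a (va z1)"
        then obtain i where i: "fst (va z1) = c" "i \<le> m" "walk M (DA c) i u uz"
          unfolding closeD_def au uz_def by auto
        have "walk M (DA c) (j + i) uy uz" using walk_trans[OF j(2) i(3)] .
        then have "closeD M DA (2*P) (va y) (va z1)" unfolding closeD_def using cy i(1) j(1) i(2) m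
          unfolding uy_def uz_def by (intro conjI exI[of _ "j+i"]) auto
        then have "closeD M DB (2*P) (vb y) (vb z1)" using ck by simp
        then have dz: "fst (vb z1) = dy" unfolding closeD_def dy_def by simp
        have "walk M (DB dy) i u uz"
        proof (rule walk_transfer[OF i(3)])
          fix i' x assume "i' < i" "walk M (DA c) i' u x"
          then show "x \<in> DB dy" using walk_trans[OF j(2)] inHA j(1) i(2) m by fastforce
        next
          show "uz \<in> DB dy" using uzB dz by simp
        qed
        then show "closeD M DB m b (vb z1)" unfolding closeD_def b_def using dz uzb i(2) by auto
      next
        assume "closeD M DB m b (vb z1)"
        then obtain i where i: "fst (vb z1) = dy" "i \<le> m" "walk M (DB dy) i u uz"
          unfolding closeD_def b_def using uzb by auto
        have "walk M (DB dy) (j + i) uy uz" using walk_trans[OF W1 i(3)] .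
        then have "closeD M DB (2*P) (vb y) (vb z1)" unfolding closeD_def using i(1) j(1) i(2) m uyb uzb
          unfolding dy_def by (intro conjI exI[of _ "j+i"]) auto
        then have "closeD M DA (2*P) (va y) (va z1)" using ck by simp
        then have cz: "fst (va z1) = c" unfolding closeD_def using cy by simp
        have "walk M (DA c) i u uz"
        proof (rule walk_transfer[OF i(3)])
          fix i' x assume "i' < i" "walk M (DB dy) i' u x"
          then show "x \<in> DA c" using walk_trans[OF W1] inHB j(1) i(2) m by fastforce
        next
          show "uz \<in> DA c" using uzA cz by simp
        qed
        then show "closeD M DA m a (va z1)" unfolding closeD_def au using cz i(2) uz_def by auto
      qed
    qed
    have cA: "card (insert (fst a) (fst ` va ` V)) + k \<le> Suc q"
    proof -
      have "insert (fst a) (fst ` va ` V) = fst ` va ` V" using yV cy au by force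
      then show ?thesis using cardA by simp
    qed
    have cB: "card (insert (fst b) (fst ` vb ` V)) + k \<le> Suc q"
    proof -
      have "insert (fst b) (fst ` vb ` V) = fst ` vb ` V" using yV unfolding b_def dy_def by force
      then show ?thesis using cardB by simp
    qed
    show ?thesis using glue[OF I zV pk C cA cB] pk unfolding pok_def by blast
  next
    case False
    define U where "U = fst ` vb ` V"
    have Uf: "finite U" "card U \<le> q" using f cardB unfolding U_def by auto
    obtain e where e: "e < K" "e \<notin> U" "DB e = DA c" using fr a au Uf unfolding fresh_def by force
    define b where "b = (e, u)"
    have uA: "u \<in> DA c" using a au by simp
    have pk: "pok M DA DB K k a b"
      unfolding pok_def using a e uA ball_sub[OF uA] unfolding au b_def by auto
    have C: "cok M DA DB k a b (va z1) (vb z1)" if z1V: "z1 \<in> V" for z1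
      unfolding cok_def PS
    proof (intro allI impI)
      fix m assume m: "m \<le> P"
      have n1: "\<not> closeD M DA m a (va z1)"
      proof
        assume "closeD M DA m a (va z1)"
        then have "closeD M DA P (va z1) a" using closeD_sym closeD_mono m by metis
        then show False using False z1V by blast
      qed
      have n2: "\<not> closeD M DB m b (vb z1)"
        using e(2) z1V unfolding closeD_def b_def U_def by auto
      show "closeD M DA m a (va z1) \<longleftrightarrow> closeD M DB m b (vb z1)" using n1 n2 by simp
    qed
    have ci: "card (insert x X) \<le> Suc (card X)" if "finite X" for x :: nat and X
      using that by (simp add: card_insert_if)
    have cA: "card (insert (fst a) (fst ` va ` V)) + k \<le> Suc q"
      using ci[of "fst ` va ` V" "fst a"] f cardA by simp
    have cB: "card (insert (fst b) (fst ` vb ` V)) + k \<le> Suc q"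
      using ci[of "fst ` vb ` V" "fst b"] f cardB by simp
    show ?thesis using glue[OF I zV pk C cA cB] pk unfolding pok_def by blast
  qed
qed



lemma worlds_copies: "a \<in> worlds (copies M D K) \<longleftrightarrow> fst a < K \<and> snd a \<in> D (fst a)"
  unfolding copies_def by (cases a) auto

lemma rel_copies: "(a, a') \<in> rel (copies M D K) i \<longleftrightarrow>
   fst a = fst a' \<and> fst a < K \<and> snd a \<in> D (fst a) \<and> snd a' \<in> D (fst a) \<and> (snd a, snd a') \<in> rel M i"
  unfolding copies_def by (cases a; cases a') auto

lemma val_copies: "a \<in> val (copies M D K) j \<longleftrightarrow> fst a < K \<and> snd a \<in> D (fst a) \<and> snd a \<in> val M j"
  unfolding copies_def by (cases a) auto

lemma closeD0: "closeD M D 0 a a' \<longleftrightarrow> a = a'"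
  unfolding closeD_def by (auto simp: prod_eq_iff)

lemma Inv_at:
  assumes "Inv M DA DB K q k V va vb" "y \<in> V" "z \<in> V"
  shows "pok M DA DB K k (va y) (vb y)" "closeD M DA 0 (va y) (va z) \<longleftrightarrow> closeD M DB 0 (vb y) (vb z)"
    "closeD M DA 1 (va y) (va z) \<longleftrightarrow> closeD M DB 1 (vb y) (vb z)"
proof -
  show "pok M DA DB K k (va y) (vb y)" using assms unfolding Inv_def by blast
  have c: "cok M DA DB k (va y) (vb y) (va z) (vb z)" using assms unfolding Inv_def by blast
  have "(1::nat) \<le> 2^k" by simp
  then show "closeD M DA 0 (va y) (va z) \<longleftrightarrow> closeD M DB 0 (vb y) (vb z)"
    "closeD M DA 1 (va y) (va z) \<longleftrightarrow> closeD M DB 1 (vb y) (vb z)"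
    using c unfolding cok_def by auto
qed

lemma rel_close:
  assumes "pok M DA DB K k a b" "pok M DA DB K k a' b'"
    "closeD M DA 1 a a' \<longleftrightarrow> closeD M DB 1 b b'"
  shows "(a, a') \<in> rel (copies M DA K) i \<longleftrightarrow> (b, b') \<in> rel (copies M DB K) i"
proof -
  have w: "fst a < K" "snd a \<in> DA (fst a)" "fst b < K" "snd b \<in> DB (fst b)" "snd a = snd b"
    "fst a' < K" "snd a' \<in> DA (fst a')" "fst b' < K" "snd b' \<in> DB (fst b')" "snd a' = snd b'"
    using assms(1,2) unfolding pok_def by auto
  show ?thesis
  proof
    assume r: "(a, a') \<in> rel (copies M DA K) i"
    then have "closeD M DA 1 a a'" unfolding rel_copies closeD_def
      by (intro conjI exI[of _ 1]) (auto simp: adj_def)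
    then have "closeD M DB 1 b b'" using assms(3) by simp
    then have "fst b = fst b'" unfolding closeD_def by simp
    then show "(b, b') \<in> rel (copies M DB K) i" using r w unfolding rel_copies by auto
  next
    assume r: "(b, b') \<in> rel (copies M DB K) i"
    then have "closeD M DB 1 b b'" unfolding rel_copies closeD_def
      by (intro conjI exI[of _ 1]) (auto simp: adj_def)
    then have "closeD M DA 1 a a'" using assms(3) by simp
    then have "fst a = fst a'" unfolding closeD_def by simp
    then show "(a, a') \<in> rel (copies M DA K) i" using r w unfolding rel_copies by auto
  qed
qed

lemma EF:
  assumes fr1: "fresh DA DB K q" and fr2: "fresh DB DA K q"
  shows "fv f \<subseteq> V \<Longrightarrow> qr f \<le> k \<Longrightarrow> Inv M DA DB K q k V va vb \<Longrightarrow>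
     sat (copies M DA K) va f \<longleftrightarrow> sat (copies M DB K) vb f"
proof (induction f arbitrary: k V va vb)
  case (FEq x y)
  then have "x \<in> V" "y \<in> V" by auto
  then show ?case using Inv_at(2)[OF FEq(3)] by (simp add: closeD0)
next
  case (FRel i x y)
  then have "x \<in> V" "y \<in> V" by auto
  then show ?case using rel_close[OF Inv_at(1)[OF FRel(3)] Inv_at(1)[OF FRel(3)] Inv_at(3)[OF FRel(3)]] by simp
next
  case (FPred j x)
  then have "x \<in> V" by auto
  then have "pok M DA DB K k (va x) (vb x)" using Inv_at[OF FPred(3)] by blast
  then show ?case unfolding pok_def by (auto simp add: val_copies)
next
  case (FNeg f) then show ?case by simp
next
  case (FConj f g) then show ?case by (metis le_sup_iff max.bounded_iff fv.simps(5) qr.simps(5) sat.simps(5))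
next
  case (FDisj f g) then show ?case by (metis le_sup_iff max.bounded_iff fv.simps(6) qr.simps(6) sat.simps(6))
next
  case (FEx z g)
  obtain k' where k: "k = Suc k'" and qg: "qr g \<le> k'" using FEx(3) by (cases k) auto
  define V0 where "V0 = V - {z}"
  have I0: "Inv M DA DB K q (Suc k') V0 va vb" using Inv_mono[OF FEx(4)[unfolded k]] unfolding V0_def by blast
  have zV: "z \<notin> V0" unfolding V0_def by simp
  have fvg: "fv g \<subseteq> insert z V0" using FEx(2) unfolding V0_def by auto
  show ?case
  proof
    assume "sat (copies M DA K) va (FEx z g)"
    then obtain a where a: "a \<in> worlds (copies M DA K)" "sat (copies M DA K) (va(z:=a)) g" by auto
    obtain b where b: "fst b < K" "snd b \<in> DB (fst b)" "Inv M DA DB K q k' (insert z V0) (va(z:=a)) (vb(z:=b))"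
      using ext_step[OF I0 zV _ _ fr1] a(1) unfolding worlds_copies by blast
    have "sat (copies M DB K) (vb(z:=b)) g" using FEx.IH[OF fvg qg b(3)] a(2) by blast
    moreover have "b \<in> worlds (copies M DB K)" using b(1,2) worlds_copies by blast
    ultimately show "sat (copies M DB K) vb (FEx z g)" by auto
  next
    assume "sat (copies M DB K) vb (FEx z g)"
    then obtain b where b: "b \<in> worlds (copies M DB K)" "sat (copies M DB K) (vb(z:=b)) g" by auto
    obtain a where a: "fst a < K" "snd a \<in> DA (fst a)" "Inv M DB DA K q k' (insert z V0) (vb(z:=b)) (va(z:=a))"
      using ext_step[OF Inv_swap[OF I0] zV _ _ fr2] b(1) unfolding worlds_copies by blast
    have "sat (copies M DA K) (va(z:=a)) g" using FEx.IH[OF fvg qg Inv_swap[OF a(3)]] b(2) by blast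
    moreover have "a \<in> worlds (copies M DA K)" using a(1,2) worlds_copies by blast
    ultimately show "sat (copies M DA K) va (FEx z g)" by auto
  qed
next
  case (FAll z g)
  obtain k' where k: "k = Suc k'" and qg: "qr g \<le> k'" using FAll(3) by (cases k) auto
  define V0 where "V0 = V - {z}"
  have I0: "Inv M DA DB K q (Suc k') V0 va vb" using Inv_mono[OF FAll(4)[unfolded k]] unfolding V0_def by blast
  have zV: "z \<notin> V0" unfolding V0_def by simp
  have fvg: "fv g \<subseteq> insert z V0" using FAll(2) unfolding V0_def by auto
  show ?case
  proof
    assume H: "sat (copies M DA K) va (FAll z g)"
    show "sat (copies M DB K) vb (FAll z g)"
    proof (simp, intro ballI)
      fix b assume b: "b \<in> worlds (copies M DB K)"
      obtain a where a: "fst a < K" "snd a \<in> DA (fst a)" "Inv M DB DA K q k' (insert z V0) (vb(z:=b)) (va(z:=a))"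
        using ext_step[OF Inv_swap[OF I0] zV _ _ fr2] b unfolding worlds_copies by blast
      have "a \<in> worlds (copies M DA K)" using a(1,2) worlds_copies by blast
      then have "sat (copies M DA K) (va(z:=a)) g" using H by auto
      then show "sat (copies M DB K) (vb(z:=b)) g" using FAll.IH[OF fvg qg Inv_swap[OF a(3)]]  by blast
    qed
  next
    assume H: "sat (copies M DB K) vb (FAll z g)"
    show "sat (copies M DA K) va (FAll z g)"
    proof (simp, intro ballI)
      fix a assume a: "a \<in> worlds (copies M DA K)"
      obtain b where b: "fst b < K" "snd b \<in> DB (fst b)" "Inv M DA DB K q k' (insert z V0) (va(z:=a)) (vb(z:=b))"
        using ext_step[OF I0 zV _ _ fr1] a unfolding worlds_copies by blast
      have "b \<in> worlds (copies M DB K)" using b(1,2) worlds_copies by blast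
      then have "sat (copies M DB K) (vb(z:=b)) g" using H by auto
      then show "sat (copies M DA K) (va(z:=a)) g" using FAll.IH[OF fvg qg b(3)]  by blast
    qed
  qed
qed



definition img :: "('a \<Rightarrow> 'b) \<Rightarrow> ('a, 'i, 'j) kripke \<Rightarrow> ('b, 'i, 'j) kripke" where
  "img f S = \<lparr> worlds = f ` worlds S, rel = (\<lambda>i. map_prod f f ` rel S i), val = (\<lambda>j. f ` val S j) \<rparr>"

lemma img_simps[simp]: "worlds (img f S) = f ` worlds S" "rel (img f S) i = map_prod f f ` rel S i"
  "val (img f S) j = f ` val S j"
  unfolding img_def by simp_all

lemma map_prod_mem: "inj f \<Longrightarrow> (f a, f b) \<in> map_prod f f ` R \<longleftrightarrow> (a, b) \<in> R"
  by (auto simp: inj_eq)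

lemma sat_img: "inj f \<Longrightarrow> sat (img f S) (f \<circ> v) \<phi> \<longleftrightarrow> sat S v \<phi>"
proof (induction \<phi> arbitrary: v)
  case (FEq x y) then show ?case by (simp add: inj_eq)
next
  case (FRel i x y) then show ?case by (simp add: map_prod_mem)
next
  case (FPred j x) then show ?case by (simp add: inj_image_mem_iff)
next
  case (FEx x g)
  have e: "(f \<circ> v)(x := f a) = f \<circ> (v(x := a))" for a by (rule ext) simp
  have h: "sat (img f S) ((f \<circ> v)(x := f a)) g \<longleftrightarrow> sat S (v(x := a)) g" for a
    unfolding e using FEx.IH[of "v(x := a)"] FEx.prems .
  have "sat (img f S) (f \<circ> v) (FEx x g) \<longleftrightarrow> (\<exists>a\<in>worlds S. sat (img f S) ((f \<circ> v)(x := f a)) g)"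
    unfolding sat.simps img_simps by blast
  then show ?case using h by (simp only: sat.simps)
next
  case (FAll x g)
  have e: "(f \<circ> v)(x := f a) = f \<circ> (v(x := a))" for a by (rule ext) simp
  have h: "sat (img f S) ((f \<circ> v)(x := f a)) g \<longleftrightarrow> sat S (v(x := a)) g" for a
    unfolding e using FAll.IH[of "v(x := a)"] FAll.prems .
  have "sat (img f S) (f \<circ> v) (FAll x g) \<longleftrightarrow> (\<forall>a\<in>worlds S. sat (img f S) ((f \<circ> v)(x := f a)) g)"
    unfolding sat.simps img_simps by blast
  then show ?case using h by (simp only: sat.simps)
qed auto

lemma holds_img: "inj f \<Longrightarrow> holds_at (img f S) (f w) \<phi> \<longleftrightarrow> holds_at S w \<phi>"
proof -
  assume "inj f"
  have "(\<lambda>_. f w) = f \<circ> (\<lambda>_. w)" by auto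
  then show ?thesis unfolding holds_at_def using sat_img[OF \<open>inj f\<close>] by metis
qed

lemma wf_img: "wf_kripke S \<Longrightarrow> wf_kripke (img f S)"
  unfolding wf_kripke_def by (auto simp: map_prod_def) (blast+)

lemma gbisim_sub:
  assumes wf: "wf_kripke S" and w: "w \<in> worlds S" and sub: "worlds S \<subseteq> worlds T"
    and v: "\<And>u j. u \<in> worlds S \<Longrightarrow> u \<in> val S j \<longleftrightarrow> u \<in> val T j"
    and r: "\<And>u i. u \<in> worlds S \<Longrightarrow> rel S i `` {u} = rel T i `` {u}"
  shows "gbisimilar S w T w"
proof -
  have rs: "rel S i `` {u} \<subseteq> worlds S" for i u using wf unfolding wf_kripke_def by blast
  have "graded_bisim S T (Id_on (worlds S))"
    unfolding graded_bisim_def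
  proof (intro conjI)
    show "Id_on (worlds S) \<noteq> {}" using w by auto
    show "Id_on (worlds S) \<subseteq> worlds S \<times> worlds T" using sub by auto
    show "\<forall>(u, u')\<in>Id_on (worlds S).
       (\<forall>j. (u \<in> val S j) = (u' \<in> val T j)) \<and>
       (\<forall>i vs. vs \<noteq> [] \<and> distinct vs \<and> set vs \<subseteq> rel S i `` {u} \<longrightarrow>
               (\<exists>vs'. distinct vs' \<and> set vs' \<subseteq> rel T i `` {u'} \<and> list_all2 (\<lambda>a b. (a, b) \<in> Id_on (worlds S)) vs vs')) \<and>
       (\<forall>i vs'. vs' \<noteq> [] \<and> distinct vs' \<and> set vs' \<subseteq> rel T i `` {u'} \<longrightarrow>
                (\<exists>vs. distinct vs \<and> set vs \<subseteq> rel S i `` {u} \<and> list_all2 (\<lambda>a b. (a, b) \<in> Id_on (worlds S)) vs vs'))"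
    proof (clarify, intro conjI allI impI)
      fix u j assume u: "u \<in> worlds S"
      show "(u \<in> val S j) = (u \<in> val T j)" using v u by blast
    next
      fix u i vs assume u: "u \<in> worlds S" and h: "vs \<noteq> [] \<and> distinct vs \<and> set vs \<subseteq> rel S i `` {u}"
      show "\<exists>vs'. distinct vs' \<and> set vs' \<subseteq> rel T i `` {u} \<and> list_all2 (\<lambda>a b. (a, b) \<in> Id_on (worlds S)) vs vs'"
        using h r[OF u, of i] rs[of i u] by (intro exI[of _ vs]) (auto simp: list_all2_same)
    next
      fix u i vs assume u: "u \<in> worlds S" and h: "vs \<noteq> [] \<and> distinct vs \<and> set vs \<subseteq> rel T i `` {u}"
      show "\<exists>vs'. distinct vs' \<and> set vs' \<subseteq> rel S i `` {u} \<and> list_all2 (\<lambda>a b. (a, b) \<in> Id_on (worlds S)) vs' vs"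
        using h r[OF u, of i] rs[of i u] by (intro exI[of _ vs]) (auto simp: list_all2_same)
    qed
  qed
  then show ?thesis unfolding gbisimilar_def using w by blast
qed



definition enc :: "nat \<times> 'w \<Rightarrow> 'w list" where "enc p = replicate (Suc (fst p)) (snd p)"
definition sng :: "'w \<Rightarrow> 'w list" where "sng u = [u]"

lemma inj_enc: "inj enc"
proof (rule injI)
  fix p p' :: "nat \<times> 'w" assume h: "enc p = enc p'"
  then have "length (enc p) = length (enc p')" by simp
  then have "fst p = fst p'" unfolding enc_def by simp
  moreover have "hd (enc p) = hd (enc p')" using h by simp
  then have "snd p = snd p'" unfolding enc_def by simp
  ultimately show "p = p'" by (simp add: prod_eq_iff)
qed

lemma inj_sng: "inj sng" unfolding sng_def by (rule injI) simp

lemma enc0: "enc (0, u) = sng u" unfolding enc_def sng_def by simp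

lemma avail:
  assumes "finite U" "card U \<le> q"
  shows "\<exists>e\<in>{a..<a + Suc q}. e \<notin> U"
proof (rule ccontr)
  assume "\<not> ?thesis"
  then have "{a..<a + Suc q} \<subseteq> U" by blast
  then have "card {a..<a + Suc q} \<le> card U" using assms(1) by (rule card_mono[rotated])
  then show False using assms(2) by simp
qed

lemma fresh_gen:
  assumes "\<And>c. c < q + q + 3 \<Longrightarrow> D1 c = X \<or> D1 c = Y"
    and "\<And>e. e \<in> {1..<1 + Suc q} \<Longrightarrow> D2 e = X"
    and "\<And>e. e \<in> {q + 2..<q + 2 + Suc q} \<Longrightarrow> D2 e = Y"
  shows "fresh D1 D2 (q + q + 3) q"
  unfolding fresh_def
proof (intro allI impI)
  fix c and U :: "nat set" assume c: "c < q + q + 3" and U: "finite U \<and> card U \<le> q"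
  show "\<exists>e<q + q + 3. e \<notin> U \<and> D2 e = D1 c"
  proof (cases "D1 c = X")
    case True
    obtain e where "e \<in> {1..<1 + Suc q}" "e \<notin> U" using avail U by blast
    then show ?thesis using True assms(2) by (intro exI[of _ e]) auto
  next
    case False
    then have "D1 c = Y" using assms(1) c by blast
    obtain e where "e \<in> {q + 2..<q + 2 + Suc q}" "e \<notin> U" using avail U by blast
    then show ?thesis using \<open>D1 c = Y\<close> assms(3) by (intro exI[of _ e]) auto
  qed
qed

lemma wf_copies: "c < K \<Longrightarrow> u \<in> D c \<Longrightarrow> wf_kripke (copies M D K)"
  unfolding wf_kripke_def by (auto simp: worlds_copies rel_copies val_copies) (auto simp: copies_def)

lemma finite_copies: "finite (worlds M) \<Longrightarrow> (\<And>c. D c \<subseteq> worlds M) \<Longrightarrow> finite (worlds (copies M D K))"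
proof -
  assume f: "finite (worlds M)" and s: "\<And>c. D c \<subseteq> worlds M"
  have "worlds (copies M D K) \<subseteq> {..<K} \<times> worlds M" using s by (force simp: worlds_copies)
  then show ?thesis using f by (meson finite_SigmaI finite_lessThan finite_subset)
qed

lemma img_rel_img: "inj f \<Longrightarrow> rel (img f S) i `` {f u} = f ` (rel S i `` {u})"
  by (auto simp: inj_eq)

lemma rel_copies_img: "rel (copies M D K) i `` {(c, u)} =
   (if c < K \<and> u \<in> D c then Pair c ` ({v. v \<in> D c \<and> (u, v) \<in> rel M i}) else {})"
  unfolding copies_def by auto



lemma finite_fv: "finite (fv f)"
  by (induction f) auto

lemma wf_restrict: "wf_kripke M \<Longrightarrow> w \<in> worlds M \<Longrightarrow> w \<in> S \<Longrightarrow> wf_kripke (restrict M S)"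
  unfolding wf_kripke_def restrict_def by auto

lemma core:
  fixes phi :: "('i, 'j) fo" and M :: "('w, 'i, 'j) kripke" and C :: "('w list, 'i, 'j) kripke \<Rightarrow> bool"
  assumes inv: "gbisim_invariant C phi" and wf: "wf_kripke M" and w: "w \<in> worlds M" and qr: "qr phi \<le> q"
    and hC: "\<And>N. (finite (worlds M) \<Longrightarrow> finite (worlds N)) \<Longrightarrow> C N"
  shows "holds_at M w phi \<longleftrightarrow> holds_at (restrict M (nbhd M (2^q - 1) w)) w phi"
proof -
  define Nb where "Nb = nbhd M (2^q - 1) w"
  define W where "W = worlds M"
  define Nw where "Nw = W \<inter> Nb"
  define R where "R = restrict M Nb"
  define K where "K = q + q + 3"
  define DA where "DA = (\<lambda>c::nat. if c \<le> Suc q then W else Nw)"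
  define DB where "DB = (\<lambda>c::nat. if c = 0 then Nw else if c \<le> Suc q then W else Nw)"
  define A where "A = copies M DA K"
  define B where "B = copies M DB K"
  have wNb: "w \<in> Nb" unfolding Nb_def nbhd_def by (intro CollectI exI[of _ 0]) simp
  have wW: "w \<in> W" using w W_def by simp
  have wNw: "w \<in> Nw" using wNb wW Nw_def by simp
  have relW: "(u, v) \<in> rel M i \<Longrightarrow> u \<in> W \<and> v \<in> W" for u v i using wf unfolding wf_kripke_def W_def by blast
  have valW: "u \<in> val M j \<Longrightarrow> u \<in> W" for u j using wf unfolding wf_kripke_def W_def by blast
  have fr1: "fresh DA DB K q" unfolding K_def
    by (rule fresh_gen[where X = W and Y = Nw]) (auto simp: DA_def DB_def)
  have fr2: "fresh DB DA K q" unfolding K_def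
    by (rule fresh_gen[where X = W and Y = Nw]) (auto simp: DA_def DB_def)
  have pk: "pok M DA DB K q (0, w) (0, w)"
    unfolding pok_def
  proof (intro conjI)
    show "fst (0::nat, w) < K" "fst (0::nat, w) < K" unfolding K_def by simp_all
    show "snd (0::nat, w) \<in> DA (fst (0::nat, w))" using wW DA_def by simp
    show "snd (0::nat, w) \<in> DB (fst (0::nat, w))" using wNw DB_def by simp
    show "snd (0::nat, w) = snd (0::nat, w)" by simp
    show "ball M (DA (fst (0::nat, w))) (2 ^ q - 1) (snd (0::nat, w)) \<subseteq> DB (fst (0::nat, w))"
    proof
      fix v assume "v \<in> ball M (DA (fst (0::nat, w))) (2 ^ q - 1) (snd (0::nat, w))"
      then obtain j where j: "j \<le> 2^q - 1" "walk M W j w v" unfolding ball_def DA_def by auto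
      have "v \<in> W" using walk_in[OF j(2) wW] .
      moreover have "v \<in> Nb" using walk_ugraph[OF j(2)] j(1) unfolding Nb_def nbhd_def by blast
      ultimately show "v \<in> DB (fst (0::nat, w))" unfolding DB_def Nw_def by simp
    qed
    show "ball M (DB (fst (0::nat, w))) (2 ^ q - 1) (snd (0::nat, w)) \<subseteq> DA (fst (0::nat, w))"
      using ball_sub[OF wNw, of M "2^q - 1"] unfolding DA_def DB_def Nw_def by auto
  qed
  have card1: "card (fst ` (\<lambda>_. (0::nat, w)) ` fv phi) \<le> 1"
  proof -
    have "fst ` (\<lambda>_. (0::nat, w)) ` fv phi \<subseteq> {0}" by auto
    then show ?thesis using card_mono[of "{0::nat}"] by fastforce
  qed
  have I: "Inv M DA DB K q q (fv phi) (\<lambda>_. (0, w)) (\<lambda>_. (0, w))"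
    unfolding Inv_def cok_def using finite_fv pk card1 closeD_refl by auto
  have ef: "sat A (\<lambda>_. (0, w)) phi \<longleftrightarrow> sat B (\<lambda>_. (0, w)) phi"
    unfolding A_def B_def using EF[OF fr1 fr2 order_refl qr I] .
  have hA: "holds_at (img enc A) (sng w) phi \<longleftrightarrow> sat A (\<lambda>_. (0, w)) phi"
    using holds_img[OF inj_enc, of A "(0, w)" phi] unfolding enc0 holds_at_def .
  have hB: "holds_at (img enc B) (sng w) phi \<longleftrightarrow> sat B (\<lambda>_. (0, w)) phi"
    using holds_img[OF inj_enc, of B "(0, w)" phi] unfolding enc0 holds_at_def .
  have hM: "holds_at (img sng M) (sng w) phi \<longleftrightarrow> holds_at M w phi" using holds_img[OF inj_sng] .
  have hR: "holds_at (img sng R) (sng w) phi \<longleftrightarrow> holds_at R w phi" using holds_img[OF inj_sng] .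
  have wfA: "wf_kripke (img enc A)" unfolding A_def
    by (rule wf_img, rule wf_copies[where c=0 and u=w]) (use wW in \<open>auto simp: K_def DA_def\<close>)
  have wfB: "wf_kripke (img enc B)" unfolding B_def
    by (rule wf_img, rule wf_copies[where c=0 and u=w]) (use wNw in \<open>auto simp: K_def DB_def\<close>)
  have wfR: "wf_kripke R" unfolding R_def using wf_restrict[OF wf w wNb] .
  have worldsR: "worlds R = Nw" unfolding R_def restrict_def Nw_def W_def by simp
  have bM: "gbisimilar (img sng M) (sng w) (img enc A) (sng w)"
  proof (rule gbisim_sub[OF wf_img[OF wf]])
    show "sng w \<in> worlds (img sng M)" using w by simp
    show "worlds (img sng M) \<subseteq> worlds (img enc A)"
      unfolding A_def by (auto simp: enc0[symmetric] worlds_copies K_def DA_def W_def)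
    fix u' assume "u' \<in> worlds (img sng M)"
    then obtain u where u: "u' = sng u" "u \<in> W" unfolding W_def by auto
    have e: "sng u = enc (0::nat, u)" by (simp add: enc0)
    show "u' \<in> val (img sng M) j \<longleftrightarrow> u' \<in> val (img enc A) j" for j
    proof -
      have "sng u \<in> enc ` val A j \<longleftrightarrow> (0, u) \<in> val A j" unfolding e by (rule inj_image_mem_iff[OF inj_enc])
      then show ?thesis unfolding u(1) img_simps inj_image_mem_iff[OF inj_sng] using u(2)
        by (simp add: A_def val_copies K_def DA_def)
    qed
    show "rel (img sng M) i `` {u'} = rel (img enc A) i `` {u'}" for i
    proof -
      have "rel (img enc A) i `` {sng u} = enc ` (rel A i `` {(0, u)})" unfolding e by (rule img_rel_img[OF inj_enc])
      then show ?thesis unfolding u(1) img_rel_img[OF inj_sng] A_def rel_copies_img using u(2) relW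
        by (auto simp: K_def DA_def enc0 image_iff) (blast dest: relW)
    qed
  qed
  have bR: "gbisimilar (img sng R) (sng w) (img enc B) (sng w)"
  proof (rule gbisim_sub[OF wf_img[OF wfR]])
    show "sng w \<in> worlds (img sng R)" using wNw worldsR by simp
    show "worlds (img sng R) \<subseteq> worlds (img enc B)"
      unfolding B_def using worldsR by (auto simp: enc0[symmetric] worlds_copies K_def DB_def inj_image_mem_iff[OF inj_enc])
    fix u' assume "u' \<in> worlds (img sng R)"
    then obtain u where u: "u' = sng u" "u \<in> Nw" using worldsR by auto
    have e: "sng u = enc (0::nat, u)" by (simp add: enc0)
    show "u' \<in> val (img sng R) j \<longleftrightarrow> u' \<in> val (img enc B) j" for j
    proof -
      have "sng u \<in> enc ` val B j \<longleftrightarrow> (0, u) \<in> val B j" unfolding e by (rule inj_image_mem_iff[OF inj_enc])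
      then show ?thesis unfolding u(1) img_simps inj_image_mem_iff[OF inj_sng] using u(2)
        by (simp add: B_def val_copies K_def DB_def R_def restrict_def Nw_def)
    qed
    show "rel (img sng R) i `` {u'} = rel (img enc B) i `` {u'}" for i
    proof -
      have "rel (img enc B) i `` {sng u} = enc ` (rel B i `` {(0, u)})" unfolding e by (rule img_rel_img[OF inj_enc])
      then show ?thesis unfolding u(1) img_rel_img[OF inj_sng] B_def rel_copies_img using u(2) relW
        by (auto simp: K_def DB_def enc0 image_iff R_def restrict_def Nw_def) (blast dest: relW)
    qed
  qed
  have DAW: "DA c \<subseteq> worlds M" for c unfolding DA_def Nw_def W_def by auto
  have DBW: "DB c \<subseteq> worlds M" for c unfolding DB_def Nw_def W_def by auto
  have CM: "C (img sng M)" by (rule hC) simp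
  have CA: "C (img enc A)" by (rule hC) (simp add: A_def finite_copies[OF _ DAW])
  have CB: "C (img enc B)" by (rule hC) (simp add: B_def finite_copies[OF _ DBW])
  have CR: "C (img sng R)" by (rule hC) (simp add: worldsR Nw_def W_def)
  have inv': "\<And>X x Y y. wf_kripke X \<Longrightarrow> wf_kripke Y \<Longrightarrow> C X \<Longrightarrow> C Y \<Longrightarrow> x \<in> worlds X \<Longrightarrow>
      y \<in> worlds Y \<Longrightarrow> gbisimilar X x Y y \<Longrightarrow> holds_at X x phi \<longleftrightarrow> holds_at Y y phi"
    using inv unfolding gbisim_invariant_def by blast
  have wA: "sng w \<in> worlds (img enc A)"
  proof -
    have "(0, w) \<in> worlds A" unfolding A_def worlds_copies using wW by (simp add: K_def DA_def)
    then have "enc (0, w) \<in> worlds (img enc A)" by simp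
    then show ?thesis by (simp only: enc0)
  qed
  have wB: "sng w \<in> worlds (img enc B)"
  proof -
    have "(0, w) \<in> worlds B" unfolding B_def worlds_copies using wNw by (simp add: K_def DB_def)
    then have "enc (0, w) \<in> worlds (img enc B)" by simp
    then show ?thesis by (simp only: enc0)
  qed
  have wM: "sng w \<in> worlds (img sng M)" using w by simp
  have wR: "sng w \<in> worlds (img sng R)" using wNw worldsR by simp
  have i1: "holds_at (img sng M) (sng w) phi \<longleftrightarrow> holds_at (img enc A) (sng w) phi"
    by (rule inv'[OF wf_img[OF wf] wfA CM CA wM wA bM])
  have i2: "holds_at (img sng R) (sng w) phi \<longleftrightarrow> holds_at (img enc B) (sng w) phi"
    by (rule inv'[OF wf_img[OF wfR] wfB CR CB wR wB bR])
  have "holds_at M w phi \<longleftrightarrow> holds_at R w phi" using hM i1 hA ef hB i2 hR by blast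
  then show ?thesis unfolding R_def Nb_def .
qed

theorem mainTheorem7:
  fixes phi :: "('i::finite, 'j::finite) fo" and x :: nat and q :: nat
  assumes "fv phi \<subseteq> {x}" and "qr phi \<le> q"
  shows "(gbisim_invariant (\<lambda>N :: ('w list, 'i, 'j) kripke. True) phi \<longrightarrow>
            (\<forall>(M :: ('w, 'i, 'j) kripke) w.
               wf_kripke M \<and> w \<in> worlds M \<and>
               rooted_tree_like (restrict M (nbhd M (2 ^ q - 1) w)) w \<longrightarrow>
               (holds_at M w phi \<longleftrightarrow> holds_at (restrict M (nbhd M (2 ^ q - 1) w)) w phi)))
       \<and> (gbisim_invariant (\<lambda>N :: ('w list, 'i, 'j) kripke. finite (worlds N)) phi \<longrightarrow>
            (\<forall>(M :: ('w, 'i, 'j) kripke) w.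
               wf_kripke M \<and> finite (worlds M) \<and> w \<in> worlds M \<and>
               rooted_tree_like (restrict M (nbhd M (2 ^ q - 1) w)) w \<longrightarrow>
               (holds_at M w phi \<longleftrightarrow> holds_at (restrict M (nbhd M (2 ^ q - 1) w)) w phi)))"
proof (intro conjI impI allI)
  fix M :: "('w, 'i, 'j) kripke" and w
  assume inv: "gbisim_invariant (\<lambda>N :: ('w list, 'i, 'j) kripke. True) phi"
    and h: "wf_kripke M \<and> w \<in> worlds M \<and> rooted_tree_like (restrict M (nbhd M (2 ^ q - 1) w)) w"
  show "holds_at M w phi \<longleftrightarrow> holds_at (restrict M (nbhd M (2 ^ q - 1) w)) w phi"
    by (rule core[OF inv]) (use h assms(2) in auto)
next
  fix M :: "('w, 'i, 'j) kripke" and w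
  assume inv: "gbisim_invariant (\<lambda>N :: ('w list, 'i, 'j) kripke. finite (worlds N)) phi"
    and h: "wf_kripke M \<and> finite (worlds M) \<and> w \<in> worlds M \<and> rooted_tree_like (restrict M (nbhd M (2 ^ q - 1) w)) w"
  show "holds_at M w phi \<longleftrightarrow> holds_at (restrict M (nbhd M (2 ^ q - 1) w)) w phi"
    by (rule core[OF inv]) (use h assms(2) in auto)
qed

end
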